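(* Let $\{\mu_n\}$ and $\mu$ be Borel probability measures on $\mathbb R^s$ with compact supports, and suppose $\mu_n\to\mu$ weakly. Then $\mathcal Z(\mu)=\emptyset$ if and only if there exist $\varepsilon>0$ and $N>0$ such that $\mathcal Z(\mu_n)=\emptyset$ for all $n\ge N$ and $$\sup_{n\ge N,\ \xi\in[0,1)^s}\ \min\{|k|:k\in\mathbb Z^s,\ |\widehat{\mu_n}(\xi+k)|\ge\varepsilon\}<\infty$$ (in particular, the set over which the minimum is taken is nonempty for every $n\ge N$ and $\xi\in[0,1)^s$).
   Context: $\widehat\mu(\xi)=\int e^{2\pi i\langle x,\xi\rangle}d\mu(x)$, and $\mathcal Z(\mu)=\{\xi\in[0,1)^s:\widehat\mu(\xi+k)=0\text{ for all }k\in\mathbb Z^s\}$. Weak convergence means $\int f\,d\mu_n\to\int f\,d\mu$ for all continuous compactly supported $f$. *)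

theory Defs
  imports "HOL-Probability.Probability"
begin

definition ft :: "(real^'n) measure \<Rightarrow> real^'n \<Rightarrow> complex" where
  "ft M \<xi> = (LINT x|M. cis (2 * pi * (x \<bullet> \<xi>)))"

definition int_lattice :: "(real^'n) set" where
  "int_lattice = {k. \<forall>i. k $ i \<in> \<int>}"

definition unit_cube :: "(real^'n) set" where
  "unit_cube = {\<xi>. \<forall>i. 0 \<le> \<xi> $ i \<and> \<xi> $ i < 1}"

definition zero_set :: "(real^'n) measure \<Rightarrow> (real^'n) set" where
  "zero_set M = {\<xi> \<in> unit_cube. \<forall>k \<in> int_lattice. ft M (\<xi> + k) = 0}"

definition borel_prob_compact :: "(real^'n) measure \<Rightarrow> bool" where
  "borel_prob_compact M \<longleftrightarrow> prob_space M \<and> sets M = sets borel \<and>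
     (\<exists>K. compact K \<and> emeasure M K = 1)"

definition weak_conv :: "(nat \<Rightarrow> (real^'n) measure) \<Rightarrow> (real^'n) measure \<Rightarrow> bool" where
  "weak_conv Ms M \<longleftrightarrow> (\<forall>f :: real^'n \<Rightarrow> real.
     continuous_on UNIV f \<and> compact (closure {x. f x \<noteq> 0}) \<longrightarrow>
     (\<lambda>n. integral\<^sup>L (Ms n) f) \<longlonglongrightarrow> integral\<^sup>L M f)"

end

theory Submission
  imports Defs
begin


lemma cis_diff_le: "cmod (cis a - cis b) \<le> \<bar>a - b\<bar>"
proof -
  have "cis a - cis b = cis b * (cis (a - b) - 1)"
    by (simp add: right_diff_distrib cis_mult)
  hence "cmod (cis a - cis b) = cmod (cis (a - b) - 1)" by (simp add: norm_mult)
  also have "\<dots> \<le> \<bar>a - b\<bar>"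
    using iexp_approx1[of "a - b" 0] by (simp add: cis_conv_exp)
  finally show ?thesis .
qed

definition cutoff :: "real \<Rightarrow> real^'n \<Rightarrow> real" where
  "cutoff R0 x = max 0 (min 1 (R0 + 1 - norm x))"

lemma cut_cont: "continuous_on UNIV (cutoff R0)"
  unfolding cutoff_def by (intro continuous_intros)

lemma cut_bounds: "0 \<le> cutoff R0 x" "cutoff R0 x \<le> 1"
  unfolding cutoff_def by auto

lemma cut_one: "norm x \<le> R0 \<Longrightarrow> cutoff R0 x = 1"
  unfolding cutoff_def by auto

lemma cut_zero: "norm x \<ge> R0 + 1 \<Longrightarrow> cutoff R0 x = 0"
  unfolding cutoff_def by auto

lemma meas_cont:
  assumes "sets M = sets borel" "continuous_on UNIV g"
  shows "g \<in> borel_measurable M"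
  using borel_measurable_continuous_onI[OF assms(2)] measurable_cong_sets[OF assms(1) refl]
  by blast

lemma integrable_bcont:
  fixes g :: "real^'n \<Rightarrow> 'b::{banach,second_countable_topology}"
  assumes "prob_space M" "sets M = sets borel" "continuous_on UNIV g" "\<And>x. norm (g x) \<le> B"
  shows "integrable M g"
proof -
  interpret prob_space M by fact
  show ?thesis
    by (rule integrable_const_bound[where B=B]) (auto simp: assms(4) intro: meas_cont[OF assms(2,3)])
qed

lemma integral_cut_one:
  assumes "prob_space M" "sets M = sets borel" "emeasure M K = 1" "K \<subseteq> cball 0 R0"
  shows "integral\<^sup>L M (cutoff R0) = 1"
proof -
  interpret prob_space M by fact
  have "prob K = 1" using assms(3) by (simp add: emeasure_eq_measure)
  hence "AE x in M. x \<in> K" by (rule AE_prob_1)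
  hence "AE x in M. cutoff R0 x = 1" by eventually_elim (use assms(4) cut_one in \<open>auto simp: subset_iff\<close>)
  hence "integral\<^sup>L M (cutoff R0) = integral\<^sup>L M (\<lambda>x. 1::real)"
    by (intro integral_cong_AE) (auto intro: meas_cont[OF assms(2)] cut_cont)
  thus ?thesis by (simp add: prob_space)
qed

lemma integral_cut_le:
  assumes "prob_space M" "sets M = sets borel"
  shows "integral\<^sup>L M (cutoff R0) \<le> 1"
proof -
  interpret prob_space M by fact
  have "integral\<^sup>L M (cutoff R0) \<le> integral\<^sup>L M (\<lambda>x. 1::real)"
    by (intro integral_mono integrable_bcont[where B=1] assms cut_cont)
       (auto simp: cut_bounds)
  thus ?thesis by (simp add: prob_space)
qed

lemma tail_bound:
  fixes h :: "real^'n \<Rightarrow> real"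
  assumes "prob_space M" "sets M = sets borel" "continuous_on UNIV h" "\<And>x. \<bar>h x\<bar> \<le> 1"
  shows "\<bar>integral\<^sup>L M h - integral\<^sup>L M (\<lambda>x. h x * cutoff R0 x)\<bar> \<le> 1 - integral\<^sup>L M (cutoff R0)"
proof -
  interpret prob_space M by fact
  have ih: "integrable M h" by (rule integrable_bcont[where B=1]) (use assms in auto)
  have ihc: "integrable M (\<lambda>x. h x * cutoff R0 x)"
  proof (rule integrable_bcont[where B=1])
    show "continuous_on UNIV (\<lambda>x. h x * cutoff R0 x)"
      using assms cut_cont by (auto intro!: continuous_intros)
    fix x show "norm (h x * cutoff R0 x) \<le> 1" using assms(4)[of x] cut_bounds[of R0 x]
      by (simp add: abs_mult mult_le_one)
  qed (use assms in auto)
  have ic: "integrable M (cutoff R0)" by (rule integrable_bcont[where B=1]) (auto simp: assms cut_cont cut_bounds)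
  have "integral\<^sup>L M h - integral\<^sup>L M (\<lambda>x. h x * cutoff R0 x) = integral\<^sup>L M (\<lambda>x. h x - h x * cutoff R0 x)"
    using ih ihc by simp
  also have "\<bar>\<dots>\<bar> \<le> integral\<^sup>L M (\<lambda>x. \<bar>h x - h x * cutoff R0 x\<bar>)"
    by (rule integral_abs_bound)
  also have "\<dots> \<le> integral\<^sup>L M (\<lambda>x. 1 - cutoff R0 x)"
  proof (rule integral_mono)
    show "integrable M (\<lambda>x. \<bar>h x - h x * cutoff R0 x\<bar>)" using ih ihc by auto
    show "integrable M (\<lambda>x. 1 - cutoff R0 x)" using ic by auto
    fix x
    have "h x - h x * cutoff R0 x = h x * (1 - cutoff R0 x)" by (simp add: algebra_simps)
    hence "\<bar>h x - h x * cutoff R0 x\<bar> = \<bar>h x\<bar> * (1 - cutoff R0 x)"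
      using cut_bounds[of R0 x] by (simp add: abs_mult)
    also have "\<dots> \<le> 1 - cutoff R0 x" using assms(4)[of x] cut_bounds[of R0 x]
      by (intro mult_left_le_one_le) auto
    finally show "\<bar>h x - h x * cutoff R0 x\<bar> \<le> 1 - cutoff R0 x" .
  qed
  also have "\<dots> = 1 - integral\<^sup>L M (cutoff R0)" using ic by (simp add: prob_space)
  finally show ?thesis .
qed




lemma cut_support: "compact (closure {x. (h x :: real) * cutoff R0 x \<noteq> 0})"
proof -
  have "{x. h x * cutoff R0 x \<noteq> 0} \<subseteq> cball 0 (R0 + 1)"
    using cut_zero[of R0] by (force simp: mem_cball_0)
  hence "bounded {x. h x * cutoff R0 x \<noteq> 0}" by (rule bounded_subset[OF bounded_cball])
  thus ?thesis by (simp add: compact_closure)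
qed

lemma conv_real:
  fixes h :: "real^'n \<Rightarrow> real"
  assumes P: "\<And>n. prob_space (Ms n)" "\<And>n. sets (Ms n) = sets borel"
    and "prob_space M" "sets M = sets borel" and W: "weak_conv Ms M"
    and one: "integral\<^sup>L M (cutoff R0) = 1"
    and h: "continuous_on UNIV h" "\<And>x. \<bar>h x\<bar> \<le> 1"
  shows "(\<lambda>n. integral\<^sup>L (Ms n) h) \<longlonglongrightarrow> integral\<^sup>L M h"
proof -
  have c: "(\<lambda>n. integral\<^sup>L (Ms n) (cutoff R0)) \<longlonglongrightarrow> 1"
    using W cut_support[of "\<lambda>_. 1" R0] cut_cont[of R0] one unfolding weak_conv_def by auto
  have g: "(\<lambda>n. integral\<^sup>L (Ms n) (\<lambda>x. h x * cutoff R0 x)) \<longlonglongrightarrow> integral\<^sup>L M (\<lambda>x. h x * cutoff R0 x)"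
    using W cut_support[of h R0] cut_cont[of R0] h(1) unfolding weak_conv_def
    by (auto intro!: continuous_intros)
  have "\<bar>integral\<^sup>L M h - integral\<^sup>L M (\<lambda>x. h x * cutoff R0 x)\<bar> \<le> 1 - integral\<^sup>L M (cutoff R0)"
    by (rule tail_bound) (use assms in auto)
  hence eq: "integral\<^sup>L M (\<lambda>x. h x * cutoff R0 x) = integral\<^sup>L M h" using one by simp
  have d: "(\<lambda>n. integral\<^sup>L (Ms n) h - integral\<^sup>L (Ms n) (\<lambda>x. h x * cutoff R0 x)) \<longlonglongrightarrow> 0"
  proof (rule Lim_null_comparison)
    show "\<forall>\<^sub>F n in sequentially. norm (integral\<^sup>L (Ms n) h - integral\<^sup>L (Ms n) (\<lambda>x. h x * cutoff R0 x))
        \<le> 1 - integral\<^sup>L (Ms n) (cutoff R0)"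
      using tail_bound[OF P(1) P(2) h] by simp
    show "(\<lambda>n. 1 - integral\<^sup>L (Ms n) (cutoff R0)) \<longlonglongrightarrow> 0"
      using tendsto_diff[OF tendsto_const[of 1] c] by simp
  qed
  from tendsto_add[OF d g] show ?thesis by (simp add: eq)
qed

lemma ft_conv:
  assumes P: "\<And>n. prob_space (Ms n)" "\<And>n. sets (Ms n) = sets borel"
    and "prob_space M" "sets M = sets borel" and W: "weak_conv Ms M"
    and one: "integral\<^sup>L M (cutoff R0) = 1"
  shows "(\<lambda>n. ft (Ms n) \<xi>) \<longlonglongrightarrow> ft M \<xi>"
proof -
  have int: "integrable N (\<lambda>x. cis (2 * pi * (x \<bullet> \<xi>)))"
    if "prob_space N" "sets N = sets borel" for N :: "(real^'a) measure"
    by (rule integrable_bcont[where B=1]) (auto intro!: continuous_intros that)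
  have re: "Re (ft N \<xi>) = integral\<^sup>L N (\<lambda>x. cos (2 * pi * (x \<bullet> \<xi>)))"
    if "prob_space N" "sets N = sets borel" for N :: "(real^'a) measure"
    unfolding ft_def using integral_Re[OF int[OF that]] by simp
  have im: "Im (ft N \<xi>) = integral\<^sup>L N (\<lambda>x. sin (2 * pi * (x \<bullet> \<xi>)))"
    if "prob_space N" "sets N = sets borel" for N :: "(real^'a) measure"
    unfolding ft_def using integral_Im[OF int[OF that]] by simp
  show ?thesis unfolding tendsto_complex_iff re[OF P] re[OF assms(3,4)] im[OF P] im[OF assms(3,4)]
    by (intro conjI conv_real[OF assms]) (auto intro!: continuous_intros)
qed




lemma ft_pointwise:
  fixes x \<xi> \<eta> :: "real^'n"
  assumes "0 \<le> R0"
  shows "cmod (cis (2 * pi * (x \<bullet> \<xi>)) - cis (2 * pi * (x \<bullet> \<eta>)))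
     \<le> 2*pi*(R0+1)*norm(\<xi>-\<eta>) * cutoff R0 x + 2 * (1 - cutoff R0 x)"
proof -
  let ?c = "2*pi*(R0+1)*norm(\<xi>-\<eta>)"
  let ?d = "cmod (cis (2 * pi * (x \<bullet> \<xi>)) - cis (2 * pi * (x \<bullet> \<eta>)))"
  have d2: "?d \<le> 2"
    using norm_triangle_ineq4[of "cis (2 * pi * (x \<bullet> \<xi>))" "cis (2 * pi * (x \<bullet> \<eta>))"] by simp
  have c0: "0 \<le> cutoff R0 x" "cutoff R0 x \<le> 1" by (rule cut_bounds)+
  show ?thesis
  proof (cases "norm x \<le> R0 + 1")
    case True
    have "?d \<le> \<bar>2 * pi * (x \<bullet> \<xi>) - 2 * pi * (x \<bullet> \<eta>)\<bar>" by (rule cis_diff_le)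
    also have "\<dots> = 2 * pi * \<bar>x \<bullet> (\<xi> - \<eta>)\<bar>"
      by (simp add: inner_diff_right abs_mult right_diff_distrib[symmetric])
    also have "\<dots> \<le> 2 * pi * (norm x * norm (\<xi> - \<eta>))"
      by (intro mult_left_mono Cauchy_Schwarz_ineq2) auto
    also have "\<dots> \<le> ?c"
      using True by (simp add: mult_right_mono)
    finally have dc: "?d \<le> ?c" .
    have "?d = ?d * cutoff R0 x + ?d * (1 - cutoff R0 x)" by (simp add: algebra_simps)
    also have "\<dots> \<le> ?c * cutoff R0 x + 2 * (1 - cutoff R0 x)"
      using c0 dc d2 by (intro add_mono mult_right_mono) auto
    finally show ?thesis .
  next
    case False
    hence "cutoff R0 x = 0" by (intro cut_zero) auto
    thus ?thesis using d2 by simp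
  qed
qed

lemma ft_lip:
  assumes "prob_space M" "sets M = sets borel" "0 \<le> R0"
  shows "cmod (ft M \<xi> - ft M \<eta>) \<le> 2*pi*(R0+1)*norm(\<xi>-\<eta>) + 2*(1 - integral\<^sup>L M (cutoff R0))"
proof -
  interpret prob_space M by fact
  let ?c = "2*pi*(R0+1)*norm(\<xi>-\<eta>)"
  have int: "integrable M (\<lambda>x. cis (2 * pi * (x \<bullet> \<zeta>)))" for \<zeta>
    by (rule integrable_bcont[where B=1]) (auto intro!: continuous_intros assms)
  have ic: "integrable M (cutoff R0)"
    by (rule integrable_bcont[where B=1]) (auto simp: assms cut_cont cut_bounds)
  have "ft M \<xi> - ft M \<eta> = (CLINT x|M. cis (2 * pi * (x \<bullet> \<xi>)) - cis (2 * pi * (x \<bullet> \<eta>)))"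
    unfolding ft_def using int by simp
  also have "cmod \<dots> \<le> (LINT x|M. cmod (cis (2 * pi * (x \<bullet> \<xi>)) - cis (2 * pi * (x \<bullet> \<eta>))))"
    by (rule integral_norm_bound)
  also have "\<dots> \<le> (LINT x|M. ?c * cutoff R0 x + 2 * (1 - cutoff R0 x))"
    by (rule integral_mono) (use int ic ft_pointwise[OF assms(3)] in auto)
  also have "\<dots> = ?c * integral\<^sup>L M (cutoff R0) + 2 * (1 - integral\<^sup>L M (cutoff R0))"
    using ic by (simp add: prob_space)
  also have "\<dots> \<le> ?c + 2 * (1 - integral\<^sup>L M (cutoff R0))"
    using integral_cut_le[OF assms(1,2), of R0] assms(3)
    by (intro add_right_mono mult_left_le) auto
  finally show ?thesis .
qed




lemma lattice_finite: "finite {k \<in> (int_lattice :: (real^'n) set). norm k \<le> r}"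
proof -
  let ?G = "PiE (UNIV :: 'n set) (\<lambda>_. {-\<lceil>r\<rceil>..\<lceil>r\<rceil>})"
  have "{k \<in> (int_lattice :: (real^'n) set). norm k \<le> r} \<subseteq> (\<lambda>g. \<chi> i. real_of_int (g i)) ` ?G"
  proof
    fix k :: "real^'n" assume k: "k \<in> {k \<in> int_lattice. norm k \<le> r}"
    have ki: "real_of_int \<lfloor>k $ i\<rfloor> = k $ i" for i
    proof -
      have "k $ i \<in> \<int>" using k by (simp add: int_lattice_def)
      then obtain z where "k $ i = of_int z" by (auto elim: Ints_cases)
      thus ?thesis by simp
    qed
    have "\<bar>k $ i\<bar> \<le> r" for i using k component_le_norm_cart[of k i] by auto
    hence "\<lfloor>k $ i\<rfloor> \<in> {-\<lceil>r\<rceil>..\<lceil>r\<rceil>}" for i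
    proof -
      have "real_of_int \<lfloor>k $ i\<rfloor> \<le> real_of_int \<lceil>r\<rceil>" "- real_of_int \<lfloor>k $ i\<rfloor> \<le> real_of_int \<lceil>r\<rceil>"
        using ki[of i] \<open>\<bar>k $ i\<bar> \<le> r\<close> le_of_int_ceiling[of r] by linarith+
      hence "\<lfloor>k $ i\<rfloor> \<le> \<lceil>r\<rceil>" "- \<lfloor>k $ i\<rfloor> \<le> \<lceil>r\<rceil>" by linarith+
      thus ?thesis by auto
    qed
    hence "(\<lambda>i. \<lfloor>k $ i\<rfloor>) \<in> ?G" by auto
    then show "k \<in> (\<lambda>g. \<chi> i. real_of_int (g i)) ` ?G"
      by (intro image_eqI[where x="\<lambda>i. \<lfloor>k $ i\<rfloor>"]) (simp_all add: ki vec_eq_iff)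
  qed
  moreover have "finite ?G" by (intro finite_PiE) auto
  ultimately show ?thesis by (meson finite_imageI finite_subset)
qed

lemma lattice_reduce:
  fixes \<xi> :: "real^'n"
  shows "\<exists>\<xi>'\<in>unit_cube. \<xi> - \<xi>' \<in> int_lattice"
proof (intro bexI)
  show "(\<chi> i. frac (\<xi> $ i)) \<in> unit_cube"
    unfolding unit_cube_def by (auto simp: frac_lt_1)
  show "\<xi> - (\<chi> i. frac (\<xi> $ i)) \<in> int_lattice"
    unfolding int_lattice_def by (auto simp: frac_def)
qed

lemma lattice_add: "a \<in> int_lattice \<Longrightarrow> b \<in> int_lattice \<Longrightarrow> a + b \<in> int_lattice"
  and lattice_diff: "a \<in> int_lattice \<Longrightarrow> b \<in> int_lattice \<Longrightarrow> a - b \<in> int_lattice"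
  unfolding int_lattice_def by auto

lemma unit_cube_sub: "unit_cube \<subseteq> cbox (0::real^'n) (\<chi> i. 1)"
  unfolding unit_cube_def by (auto simp: mem_box_cart less_imp_le)




theorem theorem3p8:
  fixes Ms :: "nat \<Rightarrow> (real^'n) measure" and M :: "(real^'n) measure"
  assumes "\<And>n. borel_prob_compact (Ms n)"
    and "borel_prob_compact M"
    and "weak_conv Ms M"
  shows "zero_set M = {} \<longleftrightarrow>
    (\<exists>\<epsilon>>0. \<exists>N::nat. N > 0 \<and> (\<forall>n\<ge>N. zero_set (Ms n) = {}) \<and>
      (\<exists>B::real. \<forall>n\<ge>N. \<forall>\<xi>\<in>unit_cube.
          {k \<in> int_lattice. \<epsilon> \<le> cmod (ft (Ms n) (\<xi> + k))} \<noteq> {} \<and>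
          Inf (norm ` {k \<in> int_lattice. \<epsilon> \<le> cmod (ft (Ms n) (\<xi> + k))}) \<le> B))"
proof -
  have P: "\<And>n. prob_space (Ms n)" "\<And>n. sets (Ms n) = sets borel"
    using assms(1) unfolding borel_prob_compact_def by auto
  have PM: "prob_space M" "sets M = sets borel"
    using assms(2) unfolding borel_prob_compact_def by auto
  obtain K where K: "compact K" "emeasure M K = 1"
    using assms(2) unfolding borel_prob_compact_def by auto
  obtain R0 where R0: "0 < R0" "K \<subseteq> cball 0 R0"
    using compact_imp_bounded[OF K(1)] unfolding bounded_pos by (auto simp: subset_iff)
  have one: "integral\<^sup>L M (cutoff R0) = 1"
    by (rule integral_cut_one[OF PM K(2) R0(2)])
  have conv: "\<And>\<xi>. (\<lambda>n. ft (Ms n) \<xi>) \<longlonglongrightarrow> ft M \<xi>"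
    by (rule ft_conv[OF P PM assms(3) one])
  define L where "L = 2*pi*(R0+1)"
  have L0: "L > 0" using R0 unfolding L_def by auto
  define \<delta> where "\<delta> n = 1 - integral\<^sup>L (Ms n) (cutoff R0)" for n
  have lip: "\<And>n \<xi> \<eta>. cmod (ft (Ms n) \<xi> - ft (Ms n) \<eta>) \<le> L * norm (\<xi> - \<eta>) + 2 * \<delta> n"
    unfolding L_def \<delta>_def using ft_lip[OF P(1) P(2), of R0] R0 by auto
  have lipM: "\<And>\<xi> \<eta>. cmod (ft M \<xi> - ft M \<eta>) \<le> L * norm (\<xi> - \<eta>)"
    unfolding L_def using ft_lip[OF PM, of R0] R0 one by auto
  have \<delta>0: "\<delta> \<longlonglongrightarrow> 0"
  proof -
    have "(\<lambda>n. integral\<^sup>L (Ms n) (cutoff R0)) \<longlonglongrightarrow> 1"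
      using assms(3) cut_support[of "\<lambda>_. 1" R0] cut_cont[of R0] one unfolding weak_conv_def by auto
    from tendsto_diff[OF tendsto_const[of 1] this] show ?thesis unfolding \<delta>_def by simp
  qed
  show ?thesis
  proof
    assume Z: "zero_set M = {}"
    have nz: "\<exists>k\<in>int_lattice. ft M (\<xi> + k) \<noteq> 0" for \<xi>
    proof -
      obtain \<xi>' where \<xi>': "\<xi>' \<in> unit_cube" "\<xi> - \<xi>' \<in> int_lattice" using lattice_reduce by blast
      then obtain k' where k': "k' \<in> int_lattice" "ft M (\<xi>' + k') \<noteq> 0"
        using Z unfolding zero_set_def by auto
      have "k' - (\<xi> - \<xi>') \<in> int_lattice" by (intro lattice_diff k' \<xi>')
      moreover have "\<xi> + (k' - (\<xi> - \<xi>')) = \<xi>' + k'" by simp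
      ultimately show ?thesis using k' by metis
    qed
    then obtain kk where kk: "\<And>\<xi>. kk \<xi> \<in> int_lattice" "\<And>\<xi>. ft M (\<xi> + kk \<xi>) \<noteq> 0"
      by metis
    define a where "a \<xi> = cmod (ft M (\<xi> + kk \<xi>))" for \<xi>
    have a0: "a \<xi> > 0" for \<xi> using kk(2) unfolding a_def by auto
    have ev: "\<forall>\<^sub>F n in sequentially. 3 * a \<xi> / 4 < cmod (ft (Ms n) (\<xi> + kk \<xi>)) \<and> \<delta> n < a \<xi> / 8" for \<xi>
    proof (rule eventually_conj)
      have "(\<lambda>n. cmod (ft (Ms n) (\<xi> + kk \<xi>))) \<longlonglongrightarrow> a \<xi>"
        unfolding a_def by (intro tendsto_norm conv)
      thus "\<forall>\<^sub>F n in sequentially. 3 * a \<xi> / 4 < cmod (ft (Ms n) (\<xi> + kk \<xi>))"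
        by (rule order_tendstoD) (use a0[of \<xi>] in auto)
      show "\<forall>\<^sub>F n in sequentially. \<delta> n < a \<xi> / 8"
        by (rule order_tendstoD[OF \<delta>0]) (use a0[of \<xi>] in auto)
    qed
    then obtain NN where NN: "\<And>\<xi> n. n \<ge> NN \<xi> \<Longrightarrow> 3 * a \<xi> / 4 < cmod (ft (Ms n) (\<xi> + kk \<xi>)) \<and> \<delta> n < a \<xi> / 8"
      unfolding eventually_sequentially by metis
    define r where "r \<xi> = a \<xi> / (4 * L)" for \<xi>
    have r0: "r \<xi> > 0" for \<xi> using a0 L0 unfolding r_def by auto
    define S where "S = cbox (0::real^'n) (\<chi> i. 1)"
    have cov: "S \<subseteq> \<Union> ((\<lambda>\<xi>. ball \<xi> (r \<xi>)) ` S)" using r0 by auto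
    have cS: "compact S" unfolding S_def by (rule compact_cbox)
    obtain F where F: "F \<subseteq> S" "finite F" "S \<subseteq> \<Union> ((\<lambda>\<xi>. ball \<xi> (r \<xi>)) ` F)"
      using compactE_image[OF cS _ cov] by auto
    have "0 \<in> S" unfolding S_def by (auto simp: mem_box_cart)
    hence Fne: "F \<noteq> {}" using F(3) by auto
    define \<epsilon> where "\<epsilon> = Min ((\<lambda>\<xi>. a \<xi> / 4) ` F)"
    define N where "N = Max (NN ` F) + 1"
    define B where "B = Max ((\<lambda>\<xi>. norm (kk \<xi>)) ` F)"
    have \<epsilon>0: "\<epsilon> > 0" unfolding \<epsilon>_def using F(2) Fne a0 by (subst Min_gr_iff) auto
    have key: "\<exists>\<xi>\<in>F. \<epsilon> \<le> cmod (ft (Ms n) (\<eta> + kk \<xi>))" if n: "n \<ge> N" and \<eta>: "\<eta> \<in> unit_cube" for n \<eta>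
    proof -
      from \<eta> unit_cube_sub F(3) obtain \<xi> where \<xi>: "\<xi> \<in> F" "\<eta> \<in> ball \<xi> (r \<xi>)"
        unfolding S_def by blast
      have "NN \<xi> \<le> Max (NN ` F)" using F(2) \<xi>(1) by auto
      hence "n \<ge> NN \<xi>" using n unfolding N_def by auto
      from NN[OF this] have h1: "3 * a \<xi> / 4 < cmod (ft (Ms n) (\<xi> + kk \<xi>))" "\<delta> n < a \<xi> / 8" by auto
      have "norm ((\<xi> + kk \<xi>) - (\<eta> + kk \<xi>)) = dist \<xi> \<eta>" by (simp add: dist_norm)
      hence dd: "L * norm ((\<xi> + kk \<xi>) - (\<eta> + kk \<xi>)) \<le> a \<xi> / 4"
        using \<xi>(2) L0 unfolding r_def by (simp add: field_simps)
      have "cmod (ft (Ms n) (\<xi> + kk \<xi>)) \<le> cmod (ft (Ms n) (\<eta> + kk \<xi>)) + cmod (ft (Ms n) (\<xi> + kk \<xi>) - ft (Ms n) (\<eta> + kk \<xi>))"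
        by (rule norm_triangle_sub)
      hence "a \<xi> / 4 \<le> cmod (ft (Ms n) (\<eta> + kk \<xi>))"
        using lip[of n "\<xi> + kk \<xi>" "\<eta> + kk \<xi>"] h1 dd by linarith
      moreover have "\<epsilon> \<le> a \<xi> / 4" unfolding \<epsilon>_def using F(2) \<xi>(1) by (intro Min_le) auto
      ultimately show ?thesis using \<xi>(1) by force
    qed
    show "\<exists>\<epsilon>>0. \<exists>N::nat. N > 0 \<and> (\<forall>n\<ge>N. zero_set (Ms n) = {}) \<and>
      (\<exists>B::real. \<forall>n\<ge>N. \<forall>\<xi>\<in>unit_cube.
          {k \<in> int_lattice. \<epsilon> \<le> cmod (ft (Ms n) (\<xi> + k))} \<noteq> {} \<and>
          Inf (norm ` {k \<in> int_lattice. \<epsilon> \<le> cmod (ft (Ms n) (\<xi> + k))}) \<le> B)"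
    proof -
      have N0: "0 < N" unfolding N_def by simp
      have Zs: "\<forall>n\<ge>N. zero_set (Ms n) = {}"
      proof (intro allI impI)
      fix n assume n: "N \<le> n"
      show "zero_set (Ms n) = {}"
      proof (rule ccontr)
        assume "zero_set (Ms n) \<noteq> {}"
        then obtain \<eta> where \<eta>: "\<eta> \<in> unit_cube" "\<forall>k\<in>int_lattice. ft (Ms n) (\<eta> + k) = 0"
          unfolding zero_set_def by auto
        from key[OF n \<eta>(1)] obtain \<xi> where "\<epsilon> \<le> cmod (ft (Ms n) (\<eta> + kk \<xi>))" by blast
        with \<eta>(2) kk(1)[of \<xi>] \<epsilon>0 show False by auto
      qed
      qed
      have Bs: "\<forall>n\<ge>N. \<forall>\<eta>\<in>unit_cube. {k \<in> int_lattice. \<epsilon> \<le> cmod (ft (Ms n) (\<eta> + k))} \<noteq> {} \<and> Inf (norm ` {k \<in> int_lattice. \<epsilon> \<le> cmod (ft (Ms n) (\<eta> + k))}) \<le> B"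
      proof (intro allI impI ballI)
      fix n and \<eta> :: "real^'n" assume n: "N \<le> n" and \<eta>: "\<eta> \<in> unit_cube"
      from key[OF n \<eta>] obtain \<xi> where \<xi>: "\<xi> \<in> F" "\<epsilon> \<le> cmod (ft (Ms n) (\<eta> + kk \<xi>))" by blast
      let ?A = "{k \<in> int_lattice. \<epsilon> \<le> cmod (ft (Ms n) (\<eta> + k))}"
      have kA: "kk \<xi> \<in> ?A" using \<xi> kk(1) by auto
      hence ne: "?A \<noteq> {}" by auto
      have "Inf (norm ` ?A) \<le> norm (kk \<xi>)"
        by (rule cInf_lower) (use kA in \<open>auto intro: bdd_belowI[where m=0]\<close>)
      also have "\<dots> \<le> B" unfolding B_def using F(2) \<xi>(1) by auto
      finally have "Inf (norm ` ?A) \<le> B" .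
      with ne show "?A \<noteq> {} \<and> Inf (norm ` ?A) \<le> B" ..
      qed
      have EB: "\<exists>B. \<forall>n\<ge>N. \<forall>\<eta>\<in>unit_cube. {k \<in> int_lattice. \<epsilon> \<le> cmod (ft (Ms n) (\<eta> + k))} \<noteq> {} \<and> Inf (norm ` {k \<in> int_lattice. \<epsilon> \<le> cmod (ft (Ms n) (\<eta> + k))}) \<le> B"
        using Bs by (rule exI)
      show ?thesis
        apply (rule exI[of _ \<epsilon>])
        apply (intro conjI \<epsilon>0 exI[of _ N] N0 Zs)
        using EB by simp
    qed
  next
    assume "\<exists>\<epsilon>>0. \<exists>N::nat. N > 0 \<and> (\<forall>n\<ge>N. zero_set (Ms n) = {}) \<and>
      (\<exists>B::real. \<forall>n\<ge>N. \<forall>\<xi>\<in>unit_cube.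
          {k \<in> int_lattice. \<epsilon> \<le> cmod (ft (Ms n) (\<xi> + k))} \<noteq> {} \<and>
          Inf (norm ` {k \<in> int_lattice. \<epsilon> \<le> cmod (ft (Ms n) (\<xi> + k))}) \<le> B)"
    then obtain \<epsilon> N B where \<epsilon>: "\<epsilon> > 0" and HB: "\<And>n \<xi>. n \<ge> N \<Longrightarrow> \<xi> \<in> unit_cube \<Longrightarrow>
          {k \<in> int_lattice. \<epsilon> \<le> cmod (ft (Ms n) (\<xi> + k))} \<noteq> {} \<and>
          Inf (norm ` {k \<in> int_lattice. \<epsilon> \<le> cmod (ft (Ms n) (\<xi> + k))}) \<le> B"
      by blast
    show "zero_set M = {}"
    proof (rule ccontr)
      assume "zero_set M \<noteq> {}"
      then obtain \<xi>0 where \<xi>0: "\<xi>0 \<in> unit_cube" "\<And>k. k \<in> int_lattice \<Longrightarrow> ft M (\<xi>0 + k) = 0"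
        unfolding zero_set_def by auto
      let ?F = "{k \<in> (int_lattice :: (real^'n) set). norm k \<le> B + 1}"
      have "\<forall>k\<in>?F. \<forall>\<^sub>F n in sequentially. cmod (ft (Ms n) (\<xi>0 + k)) < \<epsilon>"
      proof
        fix k assume "k \<in> ?F"
        hence "(\<lambda>n. cmod (ft (Ms n) (\<xi>0 + k))) \<longlonglongrightarrow> 0"
          using tendsto_norm[OF conv[of "\<xi>0 + k"]] \<xi>0(2) by auto
        thus "\<forall>\<^sub>F n in sequentially. cmod (ft (Ms n) (\<xi>0 + k)) < \<epsilon>"
          by (rule order_tendstoD) (rule \<epsilon>)
      qed
      hence "\<forall>\<^sub>F n in sequentially. \<forall>k\<in>?F. cmod (ft (Ms n) (\<xi>0 + k)) < \<epsilon>"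
        by (intro eventually_ball_finite lattice_finite)
      then obtain M0 where M0: "\<And>n. n \<ge> M0 \<Longrightarrow> \<forall>k\<in>?F. cmod (ft (Ms n) (\<xi>0 + k)) < \<epsilon>"
        unfolding eventually_sequentially by blast
      define n where "n = M0 + N"
      have n: "n \<ge> N" "\<forall>k\<in>?F. cmod (ft (Ms n) (\<xi>0 + k)) < \<epsilon>"
        using M0[of n] unfolding n_def by auto
      let ?A = "{k \<in> int_lattice. \<epsilon> \<le> cmod (ft (Ms n) (\<xi>0 + k))}"
      from HB[OF n(1) \<xi>0(1)] have A: "?A \<noteq> {}" "Inf (norm ` ?A) < B + 1" by auto
      from cInf_lessD[OF _ A(2)] A(1) obtain k where k: "k \<in> ?A" "norm k < B + 1" by auto
      hence "k \<in> ?F" by auto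
      with n(2) k(1) show False by force
    qed
  qed
qed


end
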